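(* Let $m,n\in\frac1T\mathbb N$. For homogeneous $a,b\in V$, $i\in\mathbb Q$ and $j\in\mathbb Z$, $$\mathrm{Res}_x(1+x)^ix^jY(b,x)a\equiv(-1)^{j+1}\mathrm{Res}_x(1+x)^{\mathrm{wt}\,a+\mathrm{wt}\,b+m-n-2-i-j}x^jY(a,x)b\pmod{O^T_{0,n,m}(V)}.$$
   Context: $T$ is a positive integer and $V$ is a vertex algebra (vertex operator $Y(a,x)=\sum_{i\in\mathbb Z}a_ix^{-i-1}$, vacuum $\mathbf 1$) with a grading $V=\bigoplus_{i\ge\Delta}V_i$, $\Delta\in\mathbb Z_{\le0}$, such that $\mathbf 1\in V_0$ and $a_iV_j\subset V_{\mathrm{wt}a-1-i+j}$ for homogeneous $a$ ($\mathrm{wt}\,a=k$ for $a\in V_k$). $\mathrm{Res}_x$ is the coefficient of $x^{-1}$ and $(1+x)^c$ is the binomial series in nonnegative powers of $x$. $O^T_{0,n,m}(V)$ is the span of $a_{-2}\mathbf 1+(\mathrm{wt}\,a+m-n)a$ over homogeneous $a\in V$. *)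

theory Defs
  imports Complex_Main
begin

text \<open>A vertex algebra over the complex numbers, given by its scalar multiplication sc,
its modes md a i b (= a_i b, i.e. Y(a,x)b = sum_i a_i b x^(-i-1)) and its vacuum vac.\<close>

definition is_vertex_algebra ::
  "(complex \<Rightarrow> 'v::ab_group_add \<Rightarrow> 'v) \<Rightarrow> ('v \<Rightarrow> int \<Rightarrow> 'v \<Rightarrow> 'v) \<Rightarrow> 'v \<Rightarrow> bool" where
  "is_vertex_algebra sc md vac \<longleftrightarrow>
     vector_space sc \<and>
     (\<forall>a i. Vector_Spaces.linear sc sc (md a i)) \<and>
     (\<forall>i b. Vector_Spaces.linear sc sc (\<lambda>a. md a i b)) \<and>
     (\<forall>a b. \<exists>N. \<forall>i\<ge>N. md a i b = 0) \<and>
     (\<forall>a i. md vac i a = (if i = -1 then a else 0)) \<and>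
     (\<forall>a. md a (-1) vac = a) \<and>
     (\<forall>a i. i \<ge> 0 \<longrightarrow> md a i vac = 0) \<and>
     (\<forall>a b c p q r. \<exists>N0. \<forall>N\<ge>N0.
        (\<Sum>k<N. sc (of_int p gchoose k) (md (md a (r + int k) b) (p + q - int k) c)) =
        (\<Sum>k<N. sc ((-1) ^ k * (of_int r gchoose k))
            (md a (p + r - int k) (md b (q + int k) c)
             - sc ((-1) powi r) (md b (q + r - int k) (md a (p + int k) c)))))"

definition is_graded_VA ::
  "(complex \<Rightarrow> 'v::ab_group_add \<Rightarrow> 'v) \<Rightarrow> ('v \<Rightarrow> int \<Rightarrow> 'v \<Rightarrow> 'v) \<Rightarrow> 'v \<Rightarrow>
   (int \<Rightarrow> 'v set) \<Rightarrow> int \<Rightarrow> bool" where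
  "is_graded_VA sc md vac Vg \<Delta> \<longleftrightarrow>
     is_vertex_algebra sc md vac \<and> \<Delta> \<le> 0 \<and>
     (\<forall>k. module.subspace sc (Vg k)) \<and>
     (\<forall>k<\<Delta>. Vg k = {0}) \<and>
     (\<forall>v. \<exists>f F. finite F \<and> (\<forall>k\<in>F. f k \<in> Vg k) \<and> v = sum f F) \<and>
     (\<forall>f F. finite F \<and> (\<forall>k\<in>F. f k \<in> Vg k) \<and> sum f F = 0 \<longrightarrow> (\<forall>k\<in>F. f k = 0)) \<and>
     vac \<in> Vg 0 \<and>
     (\<forall>a b k l i. a \<in> Vg k \<longrightarrow> b \<in> Vg l \<longrightarrow> md a i b \<in> Vg (k - 1 - i + l))"

definition O_gen ::
  "(complex \<Rightarrow> 'v::ab_group_add \<Rightarrow> 'v) \<Rightarrow> ('v \<Rightarrow> int \<Rightarrow> 'v \<Rightarrow> 'v) \<Rightarrow> 'v \<Rightarrow>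
   (int \<Rightarrow> 'v set) \<Rightarrow> rat \<Rightarrow> rat \<Rightarrow> 'v set" where
  "O_gen sc md vac Vg n m =
     {md a (-2) vac + sc (of_rat (of_int k + m - n)) a | a k. a \<in> Vg k}"

definition O_T0 ::
  "(complex \<Rightarrow> 'v::ab_group_add \<Rightarrow> 'v) \<Rightarrow> ('v \<Rightarrow> int \<Rightarrow> 'v \<Rightarrow> 'v) \<Rightarrow> 'v \<Rightarrow>
   (int \<Rightarrow> 'v set) \<Rightarrow> rat \<Rightarrow> rat \<Rightarrow> 'v set" where
  "O_T0 sc md vac Vg n m = module.span sc (O_gen sc md vac Vg n m)"

text \<open>Res_x (1+x)^c x^j Y(u,x) v = sum_{k\<ge>0} (c choose k) u_{k+j} v (a finite sum).\<close>

definition resY ::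
  "(complex \<Rightarrow> 'v::ab_group_add \<Rightarrow> 'v) \<Rightarrow> ('v \<Rightarrow> int \<Rightarrow> 'v \<Rightarrow> 'v) \<Rightarrow> complex \<Rightarrow> int \<Rightarrow> 'v \<Rightarrow> 'v \<Rightarrow> 'v" where
  "resY sc md c j u v =
     (\<Sum>k\<in>{k::nat. md u (int k + j) v \<noteq> 0}. sc (c gchoose k) (md u (int k + j) v))"

end

theory Submission imports Defs "HOL-Computational_Algebra.Formal_Power_Series" begin
locale VA =
  fixes sc :: "complex \<Rightarrow> 'v::ab_group_add \<Rightarrow> 'v"
    and md :: "'v \<Rightarrow> int \<Rightarrow> 'v \<Rightarrow> 'v" and vac :: 'v
    and Vg :: "int \<Rightarrow> 'v set" and \<Delta> :: int and m n :: rat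
  assumes G: "is_graded_VA sc md vac Vg \<Delta>"
begin
lemma VAx: "is_vertex_algebra sc md vac" using G by (simp add: is_graded_VA_def)
sublocale vector_space sc using VAx by (simp add: is_vertex_algebra_def)
lemma md_0r[simp]: "md a i 0 = 0"
proof -
  have "Vector_Spaces.linear sc sc (md a i)" using VAx by (simp add: is_vertex_algebra_def)
  then interpret l: Vector_Spaces.linear sc sc "md a i" .
  show ?thesis by (rule l.zero)
qed
lemma md_0l[simp]: "md 0 i b = 0"
proof -
  have "Vector_Spaces.linear sc sc (\<lambda>a. md a i b)" using VAx by (simp add: is_vertex_algebra_def)
  then interpret l: Vector_Spaces.linear sc sc "\<lambda>a. md a i b" .
  show ?thesis using l.zero by simp
qed

lemma vac_l: "md vac i a = (if i = -1 then a else 0)" using VAx by (simp add: is_vertex_algebra_def)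
lemma vac_r[simp]: "md a (-1) vac = a" using VAx by (simp add: is_vertex_algebra_def)
lemma creat: "i \<ge> 0 \<Longrightarrow> md a i vac = 0" using VAx by (simp add: is_vertex_algebra_def)
lemma trunc: "\<exists>N. \<forall>i\<ge>N. md a i b = 0" using VAx by (simp add: is_vertex_algebra_def)
lemma bor: "\<exists>N0. \<forall>N\<ge>N0.
        (\<Sum>k<N. sc (of_int p gchoose k) (md (md a (r + int k) b) (p + q - int k) c)) =
        (\<Sum>k<N. sc ((-1) ^ k * (of_int r gchoose k))
            (md a (p + r - int k) (md b (q + int k) c)
             - sc ((-1) powi r) (md b (q + r - int k) (md a (p + int k) c))))"
  using VAx unfolding is_vertex_algebra_def by blast
lemma grad: "a \<in> Vg k \<Longrightarrow> b \<in> Vg l \<Longrightarrow> md a i b \<in> Vg (k - 1 - i + l)"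
  using G unfolding is_graded_VA_def by blast
lemma vacV: "vac \<in> Vg 0" using G unfolding is_graded_VA_def by blast

definition Oset where "Oset = O_T0 sc md vac Vg n m"
lemma Oset_span: "Oset = span (O_gen sc md vac Vg n m)" by (simp add: Oset_def O_T0_def)

lemma Dgen: "a \<in> Vg k \<Longrightarrow> md a (-2) vac - sc (- of_rat (of_int k + m - n)) a \<in> Oset"
proof -
  assume "a \<in> Vg k"
  hence "md a (-2) vac + sc (of_rat (of_int k + m - n)) a \<in> O_gen sc md vac Vg n m"
    unfolding O_gen_def by blast
  hence "md a (-2) vac + sc (of_rat (of_int k + m - n)) a \<in> Oset" unfolding Oset_span by (rule span_base)
  thus ?thesis by (simp add: scale_minus_left)
qed

lemma LD: "md (md u (-2) vac) nn c = sc (- of_int nn) (md u (nn - 1) c)"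
proof -
  obtain N0 where N0: "\<forall>N\<ge>N0.
        (\<Sum>k<N. sc (of_int nn gchoose k) (md (md u (-2 + int k) vac) (nn + 0 - int k) c)) =
        (\<Sum>k<N. sc ((-1) ^ k * (of_int (-2) gchoose k))
            (md u (nn + (-2) - int k) (md vac (0 + int k) c)
             - sc ((-1) powi (-2)) (md vac (0 + (-2) - int k) (md u (nn + int k) c))))"
    using bor[where p=nn and r="-2" and a=u and b=vac and q=0 and c=c] by blast
  define N where "N = max N0 2"
  have e: "(\<Sum>k<N. sc (of_int nn gchoose k) (md (md u (-2 + int k) vac) (nn + 0 - int k) c)) =
        (\<Sum>k<N. sc ((-1) ^ k * (of_int (-2) gchoose k))
            (md u (nn + (-2) - int k) (md vac (0 + int k) c)
             - sc ((-1) powi (-2)) (md vac (0 + (-2) - int k) (md u (nn + int k) c))))"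
    using N0 N_def by auto
  have r: "(\<Sum>k<N. sc ((-1) ^ k * (of_int (-2) gchoose k))
            (md u (nn + (-2) - int k) (md vac (0 + int k) c)
             - sc ((-1) powi (-2)) (md vac (0 + (-2) - int k) (md u (nn + int k) c)))) = 0"
    by (rule sum.neutral) (simp add: vac_l)
  have l: "(\<Sum>k<N. sc (of_int nn gchoose k) (md (md u (-2 + int k) vac) (nn + 0 - int k) c))
     = (\<Sum>k<2. sc (of_int nn gchoose k) (md (md u (-2 + int k) vac) (nn + 0 - int k) c))"
    by (rule sum.mono_neutral_right) (auto simp: N_def creat)
  have "(\<Sum>k<2. sc (of_int nn gchoose k) (md (md u (-2 + int k) vac) (nn + 0 - int k) c))
     = md (md u (-2) vac) nn c + sc (of_int nn) (md u (nn - 1) c)"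
    by (simp add: numeral_2_eq_2)
  with e r l have "md (md u (-2) vac) nn c + sc (of_int nn) (md u (nn - 1) c) = 0" by simp
  thus ?thesis by (simp add: scale_minus_left eq_neg_iff_add_eq_0)
qed

lemma vacpow: "u \<in> Vg l \<Longrightarrow> md u (- int k - 1) vac - sc ((- of_rat (of_int l + m - n)) gchoose k) u \<in> Oset"
proof (induction k arbitrary: u l)
  case 0
  then show ?case by (simp add: Oset_span span_zero)
next
  case (Suc k)
  define w :: complex where "w = of_rat (of_int l + m - n)"
  define Du where "Du = md u (-2) vac"
  have DuV: "Du \<in> Vg (l+1)" using grad[OF Suc.prems vacV, of "-2"] by (simp add: Du_def add.commute)
  define c' where "c' = (- w - 1) gchoose k"
  have IH: "md Du (- int k - 1) vac - sc c' Du \<in> Oset"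
    using Suc.IH[OF DuV] by (simp add: c'_def w_def of_rat_add of_rat_diff algebra_simps)
  have D: "Du - sc (- w) u \<in> Oset" using Dgen[OF Suc.prems] by (simp add: Du_def w_def)
  define X where "X = md Du (- int k - 1) vac"
  have LX: "X = sc (of_nat (Suc k)) (md u (- int (Suc k) - 1) vac)"
    unfolding X_def Du_def LD by (simp add: algebra_simps)
  have Y: "md u (- int (Suc k) - 1) vac = sc (1 / of_nat (Suc k)) X"
    unfolding LX using of_nat_neq_0[of k, where 'a=complex] by simp
  have gc: "(- w) gchoose (Suc k) = (- w) * c' / of_nat (Suc k)"
    using gbinomial_absorption[of k "-w"] unfolding c'_def
    by (simp add: field_simps del: of_nat_Suc)
  have "md u (- int (Suc k) - 1) vac - sc ((- w) gchoose (Suc k)) u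
      = sc (1 / of_nat (Suc k)) (X - sc c' Du) + sc (c' / of_nat (Suc k)) (Du - sc (- w) u)"
    unfolding Y gc by (simp add: scale_right_diff_distrib algebra_simps)
  also have "\<dots> \<in> Oset" using IH D unfolding Oset_span X_def
    by (intro span_add span_scale)
  finally show ?case by (simp add: w_def)
qed

lemma gm1: "((-1::complex) gchoose k) = (-1)^k"
  using gbinomial_negated_upper[of "-1::complex" k] binomial_gbinomial[of k k, where 'a=complex] by simp

lemma skew: "\<exists>N1. \<forall>N\<ge>N1. md b r a =
   (\<Sum>t<N. sc (- ((-1) powi r) * (-1)^t) (md (md a (r + int t) b) (-1 - int t) vac))"
proof -
  obtain N0 where N0: "\<forall>N\<ge>N0.
        (\<Sum>k<N. sc (of_int (-1) gchoose k) (md (md a (r + int k) b) (-1 + 0 - int k) vac)) =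
        (\<Sum>k<N. sc ((-1) ^ k * (of_int r gchoose k))
            (md a (-1 + r - int k) (md b (0 + int k) vac)
             - sc ((-1) powi r) (md b (0 + r - int k) (md a (-1 + int k) vac))))"
    using bor[where p="-1" and r=r and a=a and b=b and q=0 and c=vac] by blast
  show ?thesis
  proof (intro exI allI impI)
    fix N assume "max N0 1 \<le> N"
    hence NN: "N \<ge> N0" "N \<ge> 1" by auto
    have r: "(\<Sum>k<N. sc ((-1) ^ k * (of_int r gchoose k))
            (md a (-1 + r - int k) (md b (0 + int k) vac)
             - sc ((-1) powi r) (md b (0 + r - int k) (md a (-1 + int k) vac))))
       = (\<Sum>k\<in>{0}. sc ((-1) ^ k * (of_int r gchoose k))
            (md a (-1 + r - int k) (md b (0 + int k) vac)
             - sc ((-1) powi r) (md b (0 + r - int k) (md a (-1 + int k) vac))))"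
      by (rule sum.mono_neutral_right) (use NN in \<open>auto simp: creat\<close>)
    have e: "(\<Sum>t<N. sc ((-1)^t) (md (md a (r + int t) b) (-1 - int t) vac)) = - sc ((-1) powi r) (md b r a)"
      using N0 NN(1) r by (simp add: gm1 creat)
    have "md b r a = sc (- ((-1) powi r)) (- sc ((-1) powi r) (md b r a))"
      by (simp add: scale_minus_left scale_minus_right)
    also have "\<dots> = (\<Sum>t<N. sc (- ((-1) powi r) * (-1)^t) (md (md a (r + int t) b) (-1 - int t) vac))"
      unfolding e[symmetric] by (simp add: scale_sum_right)
    finally show "md b r a = (\<Sum>t<N. sc (- ((-1) powi r) * (-1)^t) (md (md a (r + int t) b) (-1 - int t) vac))" .
  qed
qed

lemma Oset_sum: "finite S \<Longrightarrow> (\<And>s. s \<in> S \<Longrightarrow> f s \<in> Oset) \<Longrightarrow> sum f S \<in> Oset"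
  unfolding Oset_span by (rule span_sum)

lemma skew_mod:
  assumes a: "a \<in> Vg ka" and b: "b \<in> Vg kb" and hN: "\<forall>s\<ge>Nb. md a s b = 0"
    and rN: "r + int N \<ge> Nb"
  shows "md b r a - (\<Sum>t<N. sc (- ((-1) powi r) * (-1)^t *
      ((- of_rat (of_int (ka - 1 - (r + int t) + kb) + m - n)) gchoose t)) (md a (r + int t) b)) \<in> Oset"
proof -
  obtain N1 where N1: "\<forall>N\<ge>N1. md b r a =
   (\<Sum>t<N. sc (- ((-1) powi r) * (-1)^t) (md (md a (r + int t) b) (-1 - int t) vac))"
    using skew by blast
  have "md b r a = (\<Sum>t<max N1 N. sc (- ((-1) powi r) * (-1)^t) (md (md a (r + int t) b) (-1 - int t) vac))"
    using N1 by simp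
  also have "\<dots> = (\<Sum>t<N. sc (- ((-1) powi r) * (-1)^t) (md (md a (r + int t) b) (-1 - int t) vac))"
    by (rule sum.mono_neutral_right) (use hN rN in auto)
  finally have e: "md b r a = \<dots>" .
  show ?thesis
    unfolding e sum_subtractf[symmetric]
  proof (rule Oset_sum)
    fix t assume "t \<in> {..<N}"
    have ii: "(-1 - int t) = (- int t - 1)" by simp
    have V: "md a (r + int t) b \<in> Vg (ka - 1 - (r + int t) + kb)" using grad[OF a b] .
    have "sc (- ((-1) powi r) * (-1)^t) (md (md a (r + int t) b) (-1 - int t) vac)
      - sc (- ((-1) powi r) * (-1)^t * ((- of_rat (of_int (ka - 1 - (r + int t) + kb) + m - n)) gchoose t)) (md a (r + int t) b)
     = sc (- ((-1) powi r) * (-1)^t) (md (md a (r + int t) b) (- int t - 1) vac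
        - sc ((- of_rat (of_int (ka - 1 - (r + int t) + kb) + m - n)) gchoose t) (md a (r + int t) b))"
      by (simp only: ii) (simp add: scale_right_diff_distrib)
    also have "\<dots> \<in> Oset" using vacpow[OF V, of t] unfolding Oset_span by (rule span_scale)
    finally show "sc (- ((-1) powi r) * (-1)^t) (md (md a (r + int t) b) (-1 - int t) vac)
      - sc (- ((-1) powi r) * (-1)^t * ((- of_rat (of_int (ka - 1 - (r + int t) + kb) + m - n)) gchoose t)) (md a (r + int t) b) \<in> Oset" .
  qed simp
qed

lemma resY_eq:
  assumes "\<forall>k\<ge>N. md u (int k + j) v = 0"
  shows "resY sc md c j u v = (\<Sum>k<N. sc (c gchoose k) (md u (int k + j) v))"
  unfolding resY_def
proof (rule sum.mono_neutral_left)
  show "{k. md u (int k + j) v \<noteq> 0} \<subseteq> {..<N}" using assms by (auto simp: not_less[symmetric])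
qed auto
end

lemma sgn_split: "(-1::complex) powi (int s + j) * (-1)^(l-s) = (-1)^l * (-1) powi j" if "s \<le> l"
proof -
  have "(-1::complex) powi (int s + j) = (-1)^s * (-1) powi j"
    by (simp add: power_int_add power_int_of_nat)
  moreover have "(-1::complex)^s * (-1)^(l-s) = (-1)^l"
    using that by (simp add: power_add[symmetric])
  ultimately show ?thesis by (simp add: algebra_simps)
qed

lemma scal:
  fixes c :: complex and m n :: rat and ka kb j :: int
  assumes "s \<le> l"
  shows "(c gchoose s) * (- ((-1) powi (int s + j)) * (-1)^(l-s) *
     ((- of_rat (of_int (ka - 1 - ((int s + j) + int (l-s)) + kb) + m - n)) gchoose (l-s)))
  = (-1) powi (j+1) * (-1)^l * ((c gchoose s) * ((of_int (int l + j + 1) - of_rat (of_int ka + of_int kb + m - n)) gchoose (l-s)))"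
proof -
  have i: "int s + int (l - s) = int l" using assms by simp
  have arg: "(- of_rat (of_int (ka - 1 - ((int s + j) + int (l-s)) + kb) + m - n) :: complex)
     = of_int (int l + j + 1) - of_rat (of_int ka + of_int kb + m - n)"
    by (simp add: of_rat_add of_rat_diff i[symmetric] algebra_simps)
  have sg: "- ((-1::complex) powi (int s + j)) * (-1)^(l-s) = (-1) powi (j+1) * (-1)^l"
    using sgn_split[OF assms, of j] by (simp add: power_int_add)
  show ?thesis unfolding arg using sg by (simp add: algebra_simps)
qed

lemma coef_final:
  fixes i m n :: rat and ka kb j :: int
  shows "(-1) ^ l * ((of_rat i + (of_int (int l + j + 1) - of_rat (of_int ka + of_int kb + m - n))) gchoose l)
    = ((of_rat (of_int ka + of_int kb + m - n - 2 - i - of_int j) :: complex) gchoose l)"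
proof -
  have "(of_rat (of_int ka + of_int kb + m - n - 2 - i - of_int j) :: complex) gchoose l
    = (-1)^l * ((of_nat l - of_rat (of_int ka + of_int kb + m - n - 2 - i - of_int j) - 1) gchoose l)"
    by (rule gbinomial_negated_upper)
  also have "(of_nat l - of_rat (of_int ka + of_int kb + m - n - 2 - i - of_int j) - 1 :: complex)
     = of_rat i + (of_int (int l + j + 1) - of_rat (of_int ka + of_int kb + m - n))"
    by (simp add: of_rat_add of_rat_diff algebra_simps)
  finally show ?thesis by simp
qed

theorem mainTheorem8:
  fixes sc :: "complex \<Rightarrow> 'v::ab_group_add \<Rightarrow> 'v"
    and md :: "'v \<Rightarrow> int \<Rightarrow> 'v \<Rightarrow> 'v" and vac :: 'v
    and Vg :: "int \<Rightarrow> 'v set" and \<Delta> :: int and T :: nat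
    and m n i :: rat and j ka kb :: int and a b :: 'v
  assumes "is_graded_VA sc md vac Vg \<Delta>"
    and "0 < T"
    and "\<exists>m'::nat. m = of_nat m' / of_nat T"
    and "\<exists>n'::nat. n = of_nat n' / of_nat T"
    and "a \<in> Vg ka" and "b \<in> Vg kb"
  shows "resY sc md (of_rat i) j b a
         - sc ((-1) powi (j + 1))
             (resY sc md (of_rat (of_int ka + of_int kb + m - n - 2 - i - of_int j)) j a b)
         \<in> O_T0 sc md vac Vg n m"
proof -
  interpret VA sc md vac Vg \<Delta> m n using assms(1) by unfold_locales
  define c :: complex where "c = of_rat i"
  define c' :: complex where "c' = of_rat (of_int ka + of_int kb + m - n - 2 - i - of_int j)"
  obtain Na where Na: "\<forall>s\<ge>Na. md b s a = 0" using trunc by blast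
  obtain Nb where Nb: "\<forall>s\<ge>Nb. md a s b = 0" using trunc by blast
  define N :: nat where "N = nat (max Na Nb - j)"
  have NN: "int N + j \<ge> Na" "int N + j \<ge> Nb" unfolding N_def by auto
  define A where "A l = md a (int l + j) b" for l :: nat
  have A0: "A l = 0" if "l \<ge> N" for l using Nb NN that unfolding A_def by auto
  have h1: "resY sc md c j b a = (\<Sum>s<N. sc (c gchoose s) (md b (int s + j) a))"
    by (rule resY_eq) (use Na NN in auto)
  have h2: "resY sc md c' j a b = (\<Sum>l<N. sc (c' gchoose l) (A l))"
    unfolding A_def by (rule resY_eq) (use Nb NN in auto)
  define e :: "nat \<Rightarrow> nat \<Rightarrow> complex" where "e s t = - ((-1) powi (int s + j)) * (-1)^t *
      ((- of_rat (of_int (ka - 1 - ((int s + j) + int t) + kb) + m - n)) gchoose t)" for s t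
  have h3: "md b (int s + j) a - (\<Sum>t<N. sc (e s t) (md a ((int s + j) + int t) b)) \<in> Oset" for s
    unfolding e_def by (rule skew_mod[OF assms(5,6) Nb]) (use NN in auto)
  define S where "S = (\<Sum>s<N. sc (c gchoose s) (\<Sum>t<N. sc (e s t) (md a ((int s + j) + int t) b)))"
  have h4: "resY sc md c j b a - S \<in> Oset"
    unfolding h1 S_def sum_subtractf[symmetric] scale_right_diff_distrib[symmetric]
    using h3 unfolding Oset_span by (intro span_sum span_scale)
  have "S = (\<Sum>s<N. \<Sum>t<N. sc ((c gchoose s) * e s t) (A (s + t)))"
    unfolding S_def A_def by (simp add: scale_sum_right algebra_simps)
  also have "\<dots> = (\<Sum>(s,t)\<in>{..<N}\<times>{..<N}. sc ((c gchoose s) * e s t) (A (s + t)))"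
    by (rule sum.cartesian_product)
  also have "\<dots> = (\<Sum>(s,t)\<in>{(s,t). s + t < N}. sc ((c gchoose s) * e s t) (A (s + t)))"
    by (rule sum.mono_neutral_right) (auto, metis A0 not_less)
  also have "\<dots> = (\<Sum>l<N. \<Sum>s\<le>l. sc ((c gchoose s) * e s (l - s)) (A (s + (l - s))))"
    by (rule sum.triangle_reindex)
  also have "\<dots> = (\<Sum>l<N. sc (\<Sum>s\<le>l. (c gchoose s) * e s (l - s)) (A l))"
    by (simp add: scale_sum_left)
  also have "\<dots> = (\<Sum>l<N. sc ((-1) powi (j+1) * (c' gchoose l)) (A l))"
  proof (rule sum.cong[OF refl])
    fix l assume "l \<in> {..<N}"
    have "(\<Sum>s\<le>l. (c gchoose s) * e s (l - s))
      = (\<Sum>s\<le>l. (-1) powi (j+1) * (-1)^l * ((c gchoose s) * ((of_int (int l + j + 1) - of_rat (of_int ka + of_int kb + m - n)) gchoose (l-s))))"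
      unfolding e_def by (rule sum.cong[OF refl]) (rule scal, simp)
    also have "\<dots> = (-1) powi (j+1) * ((-1)^l * ((c + (of_int (int l + j + 1) - of_rat (of_int ka + of_int kb + m - n))) gchoose l))"
      using gbinomial_Vandermonde[of c "of_int (int l + j + 1) - of_rat (of_int ka + of_int kb + m - n)" l]
      by (simp add: sum_distrib_left[symmetric] atMost_atLeast0 mult.assoc)
    also have "\<dots> = (-1) powi (j+1) * (c' gchoose l)"
      unfolding c_def c'_def coef_final ..
    finally show "sc (\<Sum>s\<le>l. (c gchoose s) * e s (l - s)) (A l) = sc ((-1) powi (j+1) * (c' gchoose l)) (A l)"
      by simp
  qed
  also have "\<dots> = sc ((-1) powi (j + 1)) (resY sc md c' j a b)"
    unfolding h2 by (simp add: scale_sum_right)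
  finally have "S = sc ((-1) powi (j + 1)) (resY sc md c' j a b)" .
  with h4 show ?thesis unfolding c_def c'_def Oset_def by simp
qed

end
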